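(* For any two distinct jobs $j,k$, in the schedule produced by $1$-SORT we have $D(j,k)\le 2\,D^*(j,k)=2\min\{\sigma_j,\sigma_k\}$.
   Context: Setting: single machine, jobs $J=\{1,\dots,n\}$, each job $j$ with test time $t_j\ge0$ and processing time $p_j\ge0$ (revealed only when the test is executed); each job's test must be executed before its processing part, which may start any time after the test; operations are non-preemptive and the machine does one at a time. $\sigma_j=t_j+p_j$. Standing assumption (general position): no two of the $3n$ numbers $t_1,\dots,t_n,p_1,\dots,p_n,\sigma_1,\dots,\sigma_n$ are equal. Algorithm $1$-SORT: keep a priority queue of available operations, initially the test of every job $j$ with priority $t_j$; repeatedly remove a minimum-priority operation and execute it immediately; after executing the test of $j$, insert the processing part of $j$ with priority $p_j$. For a schedule and distinct jobs $j,k$, let $d_{k,j}$ be the total amount of time during which operations of $k$ are executed before the completion time of $j$, and $D(j,k)=d_{j,k}+d_{k,j}$, evaluated for the $1$-SORT schedule. $D^*(j,k)=\min\{\sigma_j,\sigma_k\}$. *)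

theory Defs
  imports Main Complex_Main
begin

text \<open>Jobs are indexed by 0..<n. An operation is either the test or the
processing part of a job.\<close>

datatype operation = Test nat | Proc nat

fun op_job :: "operation \<Rightarrow> nat" where
  "op_job (Test j) = j" | "op_job (Proc j) = j"

fun op_len :: "(nat \<Rightarrow> real) \<Rightarrow> (nat \<Rightarrow> real) \<Rightarrow> operation \<Rightarrow> real" where
  "op_len t p (Test j) = t j" | "op_len t p (Proc j) = p j"

fun new_ops :: "operation \<Rightarrow> operation set" where
  "new_ops (Test j) = {Proc j}" | "new_ops (Proc j) = {}"

text \<open>The natural number argument is fuel (number of remaining steps).\<close>
fun sort1_run :: "(nat \<Rightarrow> real) \<Rightarrow> (nat \<Rightarrow> real) \<Rightarrow> nat \<Rightarrow> operation set \<Rightarrow> operation list" where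
  "sort1_run t p 0 Q = []"
| "sort1_run t p (Suc m) Q =
     (if Q = {} then []
      else (let x0 = arg_min (op_len t p) (\<lambda>x. x \<in> Q)
            in x0 # sort1_run t p m ((Q - {x0}) \<union> new_ops x0)))"

text \<open>The sequence of operations executed by 1-SORT on jobs 0..<n (executed
back to back, without idle time, starting at time 0).\<close>
definition sort1_schedule :: "nat \<Rightarrow> (nat \<Rightarrow> real) \<Rightarrow> (nat \<Rightarrow> real) \<Rightarrow> operation list" where
  "sort1_schedule n t p = sort1_run t p (2 * n) (Test ` {..<n})"

text \<open>d k j: total time during which operations of k are executed before the
completion time of j (the completion of j's processing part). Since the
schedule is a non-preemptive sequence, these are exactly the operations of k
preceding the processing part of j in the sequence.\<close>
definition d_time :: "nat \<Rightarrow> (nat \<Rightarrow> real) \<Rightarrow> (nat \<Rightarrow> real) \<Rightarrow> nat \<Rightarrow> nat \<Rightarrow> real" where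
  "d_time n t p k j =
     sum_list (map (\<lambda>x. if op_job x = k then op_len t p x else 0)
       (takeWhile (\<lambda>x. x \<noteq> Proc j) (sort1_schedule n t p)))"

definition D_sort1 :: "nat \<Rightarrow> (nat \<Rightarrow> real) \<Rightarrow> (nat \<Rightarrow> real) \<Rightarrow> nat \<Rightarrow> nat \<Rightarrow> real" where
  "D_sort1 n t p j k = d_time n t p j k + d_time n t p k j"

definition general_position :: "nat \<Rightarrow> (nat \<Rightarrow> real) \<Rightarrow> (nat \<Rightarrow> real) \<Rightarrow> bool" where
  "general_position n t p \<longleftrightarrow>
     distinct (map t [0..<n] @ map p [0..<n] @ map (\<lambda>j. t j + p j) [0..<n])"

end

theory Submission
  imports Defs
begin

abbreviation am where "am t p Q \<equiv> arg_min (op_len t p) (\<lambda>x. x \<in> Q)"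

lemma am_in: "finite Q \<Longrightarrow> Q \<noteq> {} \<Longrightarrow> am t p Q \<in> Q"
  using arg_min_if_finite(1)[of Q "op_len t p"] by (simp add: arg_min_on_def)

lemma am_le: "finite Q \<Longrightarrow> y \<in> Q \<Longrightarrow> op_len t p (am t p Q) \<le> op_len t p y"
  using arg_min_least[of Q y "op_len t p"] by (auto simp add: arg_min_on_def)

lemma fin_new: "finite (new_ops x)" by (cases x) auto

lemma run_Suc: "Q \<noteq> {} \<Longrightarrow> sort1_run t p (Suc m) Q =
   am t p Q # sort1_run t p m ((Q - {am t p Q}) \<union> new_ops (am t p Q))"
  by (simp add: Let_def)

lemma P1: "finite Q \<Longrightarrow> i < length (sort1_run t p m Q) \<Longrightarrow>
  x \<notin> set (take i (sort1_run t p m Q)) \<Longrightarrow>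
  x \<in> Q \<or> (\<exists>j. x = Proc j \<and> Test j \<in> set (take i (sort1_run t p m Q))) \<Longrightarrow>
  op_len t p (sort1_run t p m Q ! i) \<le> op_len t p x"
proof (induction m arbitrary: Q i)
  case 0
  then show ?case by simp
next
  case (Suc m)
  have Qne: "Q \<noteq> {}" using Suc.prems(2) by (auto split: if_splits)
  define x0 where "x0 = am t p Q"
  define Q' where "Q' = (Q - {x0}) \<union> new_ops x0"
  have run: "sort1_run t p (Suc m) Q = x0 # sort1_run t p m Q'"
    using run_Suc[OF Qne] by (simp add: x0_def Q'_def)
  have fQ': "finite Q'" using Suc.prems(1) fin_new by (simp add: Q'_def)
  show ?case
  proof (cases i)
    case 0
    then have "x \<in> Q" using Suc.prems(4) by auto
    then show ?thesis using am_le[OF Suc.prems(1)] 0 run x0_def by simp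
  next
    case (Suc i')
    have xne: "x \<noteq> x0" using Suc.prems(3) run Suc by auto
    have "x \<in> Q' \<or> (\<exists>j. x = Proc j \<and> Test j \<in> set (take i' (sort1_run t p m Q')))"
      using Suc.prems(4) run Suc xne by (auto simp: Q'_def)
    moreover have "i' < length (sort1_run t p m Q')" using Suc.prems(2) run Suc by simp
    moreover have "x \<notin> set (take i' (sort1_run t p m Q'))" using Suc.prems(3) run Suc by simp
    ultimately show ?thesis using Suc.IH[OF fQ'] run Suc by simp
  qed
qed

lemma P0: "finite Q \<Longrightarrow> i < length (sort1_run t p m Q) \<Longrightarrow>
  sort1_run t p m Q ! i = Proc j \<Longrightarrow> Proc j \<notin> Q \<Longrightarrow>
  Test j \<in> set (take i (sort1_run t p m Q))"
proof (induction m arbitrary: Q i)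
  case 0
  then show ?case by simp
next
  case (Suc m)
  have Qne: "Q \<noteq> {}" using Suc.prems(2) by (auto split: if_splits)
  define x0 where "x0 = am t p Q"
  define Q' where "Q' = (Q - {x0}) \<union> new_ops x0"
  have run: "sort1_run t p (Suc m) Q = x0 # sort1_run t p m Q'"
    using run_Suc[OF Qne] by (simp add: x0_def Q'_def)
  have fQ': "finite Q'" using Suc.prems(1) fin_new by (simp add: Q'_def)
  have x0Q: "x0 \<in> Q" using am_in[OF Suc.prems(1) Qne] x0_def by simp
  show ?case
  proof (cases i)
    case 0
    then show ?thesis using Suc.prems x0Q run by simp
  next
    case (Suc i')
    show ?thesis
    proof (cases "Proc j \<in> Q'")
      case True
      then have "Proc j \<in> new_ops x0" using Suc.prems(4) by (auto simp: Q'_def)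
      then have "x0 = Test j" by (cases x0) auto
      then show ?thesis using run Suc by simp
    next
      case False
      then show ?thesis using Suc.IH[OF fQ', of i'] Suc.prems run \<open>i = Suc i'\<close> by simp
    qed
  qed
qed

definition invQ where "invQ Q \<longleftrightarrow> finite Q \<and> (\<forall>j. Proc j \<in> Q \<longrightarrow> Test j \<notin> Q)"
definition w where "w Q = card Q + card (Test -` Q)"

lemma R: "invQ Q \<Longrightarrow> w Q \<le> m \<Longrightarrow>
  distinct (sort1_run t p m Q) \<and> set (sort1_run t p m Q) = Q \<union> Proc ` (Test -` Q)"
proof (induction m arbitrary: Q)
  case 0
  then show ?case by (auto simp: invQ_def w_def)
next
  case (Suc m)
  show ?case
  proof (cases "Q = {}")
    case True then show ?thesis by simp
  next
    case Qne: False
    have fQ: "finite Q" using Suc.prems by (simp add: invQ_def)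
    have fT: "finite (Test -` Q)" using fQ by (rule finite_vimageI) (auto simp: inj_def)
    define x0 where "x0 = am t p Q"
    define Q' where "Q' = (Q - {x0}) \<union> new_ops x0"
    have run: "sort1_run t p (Suc m) Q = x0 # sort1_run t p m Q'"
      using run_Suc[OF Qne] by (simp add: x0_def Q'_def)
    have x0Q: "x0 \<in> Q" using am_in[OF fQ Qne] x0_def by simp
    have "invQ Q' \<and> w Q' \<le> m \<and> x0 \<notin> Q' \<union> Proc ` (Test -` Q')
      \<and> insert x0 (Q' \<union> Proc ` (Test -` Q')) = Q \<union> Proc ` (Test -` Q)"
    proof (cases x0)
      case (Test i)
      have nP: "Proc i \<notin> Q" using Suc.prems x0Q Test by (auto simp: invQ_def)
      have Q'eq: "Q' = insert (Proc i) (Q - {Test i})" using Test by (auto simp: Q'_def)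
      have T': "Test -` Q' = Test -` Q - {i}" using Q'eq by auto
      have c1: "card Q' = card Q" using Q'eq nP fQ x0Q Test
        by (simp add: card_insert_if card_Diff_singleton card_gt_0_iff Suc_pred' del: card_Diff_insert)
          (metis card_gt_0_iff Suc_pred empty_iff)
      have c2: "card (Test -` Q') = card (Test -` Q) - 1" using T' fT x0Q Test
        by (simp add: card_Diff_singleton)
      have "card (Test -` Q) \<ge> 1" using fT x0Q Test
        by (metis One_nat_def Suc_leI card_gt_0_iff empty_iff vimage_singleton_eq insertCI
            vimageI2 )
      then have "w Q' \<le> m" using c1 c2 Suc.prems(2) by (simp add: w_def)
      moreover have "invQ Q'" using Suc.prems fQ Q'eq by (auto simp: invQ_def)
      ultimately show ?thesis using Q'eq T' Test x0Q by auto
    next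
      case (Proc i)
      have nT: "Test i \<notin> Q" using Suc.prems x0Q Proc by (auto simp: invQ_def)
      have Q'eq: "Q' = Q - {Proc i}" using Proc by (auto simp: Q'_def)
      have T': "Test -` Q' = Test -` Q" using Q'eq by auto
      have c1: "card Q' = card Q - 1" using Q'eq fQ x0Q Proc
        by (simp add: card_Diff_singleton)
      have "card Q \<ge> 1" using fQ x0Q
        by (metis One_nat_def Suc_leI card_gt_0_iff empty_iff)
      then have "w Q' \<le> m" using c1 T' Suc.prems(2) by (simp add: w_def)
      moreover have "invQ Q'" using Suc.prems fQ Q'eq by (auto simp: invQ_def)
      ultimately show ?thesis using Q'eq T' Proc x0Q nT by auto
    qed
    then show ?thesis using Suc.IH run by auto
  qed
qed

lemma sched: "distinct (sort1_schedule n t p) \<and>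
  set (sort1_schedule n t p) = Test ` {..<n} \<union> Proc ` {..<n}"
proof -
  have i: "invQ (Test ` {..<n})" by (auto simp: invQ_def)
  have v: "Test -` (Test ` {..<n}) = {..<n}" by auto
  have "card (Test ` {..<n}) = n" by (subst card_image) (auto simp: inj_on_def)
  then have "w (Test ` {..<n}) \<le> 2 * n" using v by (simp add: w_def)
  then show ?thesis using R[OF i, of "2*n" t p] v by (simp add: sort1_schedule_def)
qed

lemma mem_take: "distinct L \<Longrightarrow> q < length L \<Longrightarrow> (L ! q \<in> set (take i L)) = (q < i)"
proof
  assume d: "distinct L" and q: "q < length L" and "L ! q \<in> set (take i L)"
  then obtain r where r: "r < length (take i L)" "take i L ! r = L ! q"
    by (auto simp: in_set_conv_nth)
  then have "L ! r = L ! q" "r < length L" "r < i" by auto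
  then show "q < i" using nth_eq_iff_index_eq[OF d, of r q] q by auto
next
  assume "distinct L" "q < length L" "q < i"
  then show "L ! q \<in> set (take i L)" by (auto simp: in_set_conv_nth intro!: exI[of _ q])
qed

lemma dtime: assumes d: "distinct (sort1_schedule n t p)" and b: "b < length (sort1_schedule n t p)"
  and pb: "sort1_schedule n t p ! b = Proc j"
  shows "d_time n t p k j = (if Test k \<in> set (take b (sort1_schedule n t p)) then t k else 0)
     + (if Proc k \<in> set (take b (sort1_schedule n t p)) then p k else 0)"
proof -
  let ?L = "sort1_schedule n t p"
  let ?f = "\<lambda>x. if op_job x = k then op_len t p x else 0"
  have tw: "takeWhile (\<lambda>x. x \<noteq> Proc j) ?L = take b ?L"
  proof (rule takeWhile_eq_take_P_nth)
    fix i assume "i < b" "i < length ?L"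
    then show "?L ! i \<noteq> Proc j" using nth_eq_iff_index_eq[OF d, of i b] b pb by auto
  qed (use pb in auto)
  let ?S = "set (take b ?L)"
  have "d_time n t p k j = sum ?f ?S"
    unfolding d_time_def tw by (rule sum_list_distinct_conv_sum_set) (use d in auto)
  also have "\<dots> = sum (op_len t p) {x \<in> ?S. op_job x = k}"
    by (simp add: sum.inter_filter)
  also have "{x \<in> ?S. op_job x = k} = (if Test k \<in> ?S then {Test k} else {}) \<union> (if Proc k \<in> ?S then {Proc k} else {})"
    apply (auto split: if_splits)
    apply (case_tac x; auto)+
    done
  also have "sum (op_len t p) \<dots> = (if Test k \<in> ?S then t k else 0) + (if Proc k \<in> ?S then p k else 0)"
    by (auto split: if_splits)
  finally show ?thesis .
qed


lemma P1s: "i < length (sort1_schedule n t p) \<Longrightarrow> x \<notin> set (take i (sort1_schedule n t p)) \<Longrightarrow>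
  x \<in> Test ` {..<n} \<or> (\<exists>j. x = Proc j \<and> Test j \<in> set (take i (sort1_schedule n t p))) \<Longrightarrow>
  op_len t p (sort1_schedule n t p ! i) \<le> op_len t p x"
  unfolding sort1_schedule_def by (rule P1) auto

lemma P0s: "i < length (sort1_schedule n t p) \<Longrightarrow> sort1_schedule n t p ! i = Proc j \<Longrightarrow>
   Test j \<in> set (take i (sort1_schedule n t p))"
  unfolding sort1_schedule_def by (rule P0) auto

lemma key:
  fixes n :: nat and t p :: "nat \<Rightarrow> real" and j k :: nat
  defines "L \<equiv> sort1_schedule n t p"
  assumes nn: "\<forall>i<n. t i \<ge> 0 \<and> p i \<ge> 0"
    and jn: "j < n" and kn: "k < n" and jk: "j \<noteq> k"
    and a: "a < length L" "L ! a = Test j"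
    and b: "b < length L" "L ! b = Proc j"
    and c: "c < length L" "L ! c = Test k"
    and e: "e < length L" "L ! e = Proc k"
    and ac: "a < c"
  shows "D_sort1 n t p j k \<le> 2 * min (t j + p j) (t k + p k)"
proof -
  have d: "distinct L" using sched L_def by auto
  note mt = mem_take[OF d]
  have ab: "a < b" using P0s[of b n t p j] b a mt[of a b] unfolding L_def by auto
  have ce: "c < e" using P0s[of e n t p k] e c mt[of c e] unfolding L_def by auto
  have D: "D_sort1 n t p j k = (if a < e then t j else 0) + (if b < e then p j else 0)
     + (if c < b then t k else 0) + (if e < b then p k else 0)"
  proof -
    have m1: "(Test j \<in> set (take e L)) = (a < e)" using mt[of a e] a by simp
    have m2: "(Proc j \<in> set (take e L)) = (b < e)" using mt[of b e] b by simp
    have m3: "(Test k \<in> set (take b L)) = (c < b)" using mt[of c b] c by simp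
    have m4: "(Proc k \<in> set (take b L)) = (e < b)" using mt[of e b] e by simp
    show ?thesis unfolding D_sort1_def
      using dtime[of n t p e k j] dtime[of n t p b j k] d b e m1 m2 m3 m4
      unfolding L_def by simp
  qed
  have f1: "t j \<le> t k"
    using P1s[of a n t p "Test k"] a c ac mt[of c a] kn unfolding L_def by auto
  have f2: "b < c \<Longrightarrow> p j \<le> t k"
    using P1s[of b n t p "Test k"] b c mt[of c b] kn unfolding L_def by auto
  have f3: "c < b \<Longrightarrow> t k \<le> p j"
    using P1s[of c n t p "Proc j"] b c mt[of b c] mt[of a c] a ac unfolding L_def by auto
  have f4: "c < b \<Longrightarrow> b < e \<Longrightarrow> p j \<le> p k"
    using P1s[of b n t p "Proc k"] b e mt[of e b] mt[of c b] c unfolding L_def by auto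
  have f5: "e < b \<Longrightarrow> p k \<le> p j"
    using P1s[of e n t p "Proc j"] b e mt[of b e] mt[of a e] a ac ce unfolding L_def by auto
  have bc: "b \<noteq> c" "b \<noteq> e" using b c e jk by auto
  have "t j \<ge> 0" "p j \<ge> 0" "t k \<ge> 0" "p k \<ge> 0" using nn jn kn by auto
  note nn' = this
  have fin: "\<And>x::real. x \<le> 2 * (t j + p j) \<Longrightarrow> x \<le> 2 * (t k + p k) \<Longrightarrow>
      x \<le> 2 * min (t j + p j) (t k + p k)" by (simp add: min_def)
  consider "b < c" | "c < b" "b < e" | "e < b" using bc ce by linarith
  then show ?thesis
  proof cases
    case 1
    then have "D_sort1 n t p j k = t j + p j" unfolding D using ac ce by simp
    then show ?thesis using fin f1 f2 1 nn' by simp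
  next
    case 2
    then have "D_sort1 n t p j k = t j + p j + t k" unfolding D using ac ce by simp
    then show ?thesis using fin f1 f3 f4 2 nn' by simp
  next
    case 3
    then have "D_sort1 n t p j k = t j + t k + p k" unfolding D using ac ce by simp
    then show ?thesis using fin f1 f3 f5 3 nn' ce by simp
  qed
qed

theorem mainTheorem5:
  fixes n :: nat and t p :: "nat \<Rightarrow> real" and j k :: nat
  assumes "\<forall>i<n. t i \<ge> 0 \<and> p i \<ge> 0"
    and "general_position n t p"
    and "j < n" and "k < n" and "j \<noteq> k"
  shows "D_sort1 n t p j k \<le> 2 * min (t j + p j) (t k + p k)"
proof -
  let ?L = "sort1_schedule n t p"
  have s: "distinct ?L" "set ?L = Test ` {..<n} \<union> Proc ` {..<n}" using sched by auto
  obtain a where a: "a < length ?L" "?L ! a = Test j"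
    using s(2) assms(3) by (metis UnI1 image_eqI in_set_conv_nth lessThan_iff)
  obtain b where b: "b < length ?L" "?L ! b = Proc j"
    using s(2) assms(3) by (metis UnI2 image_eqI in_set_conv_nth lessThan_iff)
  obtain c where c: "c < length ?L" "?L ! c = Test k"
    using s(2) assms(4) by (metis UnI1 image_eqI in_set_conv_nth lessThan_iff)
  obtain e where e: "e < length ?L" "?L ! e = Proc k"
    using s(2) assms(4) by (metis UnI2 image_eqI in_set_conv_nth lessThan_iff)
  have "a \<noteq> c" using a c assms(5) by auto
  then consider "a < c" | "c < a" by linarith
  then show ?thesis
  proof cases
    case 1
    then show ?thesis using key[OF assms(1,3,4,5) a b c e] by simp
  next
    case 2
    then have "D_sort1 n t p k j \<le> 2 * min (t k + p k) (t j + p j)"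
      using key[OF assms(1,4,3) assms(5)[symmetric] c e a b] by simp
    then show ?thesis by (simp add: D_sort1_def min.commute add.commute)
  qed
qed

end
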